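(* Let $(\mathfrak{g},f)$ be a factorizable Lie bialgebra. Put $\mathfrak{c}_1=\operatorname{Im}(f-1)$; then $\mathfrak{c}_1^\perp=\operatorname{Ker}f$, and $f$ induces an endomorphism $\tilde f$ of $\mathfrak{c}_1/\mathfrak{c}_1^\perp$ making $(\mathfrak{c}_1/\mathfrak{c}_1^\perp,\tilde f)$ a factorizable Lie bialgebra (with the form induced by $\kappa$). The map $\mathfrak{g}_f^{cop}\to\mathfrak{c}_1/\mathfrak{c}_1^\perp$, $x\mapsto (f-1)(x)+\mathfrak{c}_1^\perp$, is a surjective homomorphism of Lie bialgebras, with kernel $\operatorname{Ker}f+\operatorname{Ker}(f-1)$.
   Context: Let $\mathfrak{g}$ be a finite-dimensional complex Lie algebra with a nondegenerate invariant symmetric bilinear form $\kappa$; $\perp$ and adjoints $f^*$ are taken with respect to $\kappa$. A factorizable Lie bialgebra $(\mathfrak{g},f)$ is given by $f\in\operatorname{End}\mathfrak{g}$ with (i) $f+f^*=1$ and (ii) $[f(x),f(y)]=f([x,f(y)]+[f(x),y]-[x,y])$ for all $x,y$; its cobracket is $\delta(x)=[x\otimes1+1\otimes x,r]$ where $r=\sum_a x_a\otimes f(x^a)$ for any pair of $\kappa$-dual bases $(x_a),(x^a)$. $\mathfrak{g}_f$ denotes the dual Lie bialgebra $\mathfrak{g}^*$ transported to $\mathfrak{g}$ via $\kappa$: as a Lie algebra it is $\mathfrak{g}$ with bracket $[x,y]_f=[x,f(y)]+[f(x),y]-[x,y]$, and its cobracket is the transpose (via $\kappa$) of the bracket of $\mathfrak{g}$.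 For a Lie bialgebra $\mathfrak{l}$, $\mathfrak{l}^{cop}$ is $\mathfrak{l}$ with the same bracket and the negated cobracket. *)

theory Defs
  imports "HOL-Analysis.Analysis"
begin

text \<open>Elements of the
tensor square V (x) V of a finite-dimensional space are represented by their values on pairs
of linear functionals: the tensor sum_i a_i (x) b_i is the function
(alpha, beta) maps to sum_i alpha a_i * beta b_i.  Two tensors are equal iff these values agree
on all pairs of linear functionals.\<close>

type_synonym 'v functional = "'v \<Rightarrow> complex"
type_synonym 'v tensor2 = "'v functional \<Rightarrow> 'v functional \<Rightarrow> complex"

definition lin_functional :: "(complex \<Rightarrow> 'v::ab_group_add \<Rightarrow> 'v) \<Rightarrow> 'v functional \<Rightarrow> bool" where
  "lin_functional sc \<alpha> \<longleftrightarrow> Vector_Spaces.linear sc ((*) :: complex \<Rightarrow> complex \<Rightarrow> complex) \<alpha>"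

definition fin_dim_space :: "(complex \<Rightarrow> 'v::ab_group_add \<Rightarrow> 'v) \<Rightarrow> bool" where
  "fin_dim_space sc \<longleftrightarrow> (\<exists>B. finite_dimensional_vector_space sc B)"

definition lie_algebra :: "(complex \<Rightarrow> 'v::ab_group_add \<Rightarrow> 'v) \<Rightarrow> ('v \<Rightarrow> 'v \<Rightarrow> 'v) \<Rightarrow> bool" where
  "lie_algebra sc br \<longleftrightarrow> vector_space sc
     \<and> (\<forall>x. Vector_Spaces.linear sc sc (br x)) \<and> (\<forall>y. Vector_Spaces.linear sc sc (\<lambda>x. br x y))
     \<and> (\<forall>x. br x x = 0)
     \<and> (\<forall>x y z. br x (br y z) + br y (br z x) + br z (br x y) = 0)"

definition invariant_form :: "(complex \<Rightarrow> 'v::ab_group_add \<Rightarrow> 'v) \<Rightarrow> ('v \<Rightarrow> 'v \<Rightarrow> 'v)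
    \<Rightarrow> ('v \<Rightarrow> 'v \<Rightarrow> complex) \<Rightarrow> bool" where
  "invariant_form sc br \<kappa> \<longleftrightarrow>
     (\<forall>x. lin_functional sc (\<kappa> x))
     \<and> (\<forall>x y. \<kappa> x y = \<kappa> y x)
     \<and> (\<forall>x y z. \<kappa> (br x y) z = \<kappa> x (br y z))
     \<and> (\<forall>x. (\<forall>y. \<kappa> x y = 0) \<longrightarrow> x = 0)"

definition quadratic_lie_algebra :: "(complex \<Rightarrow> 'v::ab_group_add \<Rightarrow> 'v) \<Rightarrow> ('v \<Rightarrow> 'v \<Rightarrow> 'v)
    \<Rightarrow> ('v \<Rightarrow> 'v \<Rightarrow> complex) \<Rightarrow> bool" where
  "quadratic_lie_algebra sc br \<kappa> \<longleftrightarrow> fin_dim_space sc \<and> lie_algebra sc br \<and> invariant_form sc br \<kappa>"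

definition perp :: "('v::ab_group_add \<Rightarrow> 'v \<Rightarrow> complex) \<Rightarrow> 'v set \<Rightarrow> 'v set" where
  "perp \<kappa> S = {x. \<forall>y\<in>S. \<kappa> x y = 0}"

text \<open>Factorizable Lie bialgebra (g, f): conditions (i) f + f* = 1, written through kappa
(f* is the kappa-adjoint, kappa (f* x) y = kappa x (f y)), and (ii).\<close>
definition factorizable :: "(complex \<Rightarrow> 'v::ab_group_add \<Rightarrow> 'v) \<Rightarrow> ('v \<Rightarrow> 'v \<Rightarrow> 'v)
    \<Rightarrow> ('v \<Rightarrow> 'v \<Rightarrow> complex) \<Rightarrow> ('v \<Rightarrow> 'v) \<Rightarrow> bool" where
  "factorizable sc br \<kappa> f \<longleftrightarrow> quadratic_lie_algebra sc br \<kappa> \<and> Vector_Spaces.linear sc sc f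
     \<and> (\<forall>x y. \<kappa> (f x) y + \<kappa> x (f y) = \<kappa> x y)
     \<and> (\<forall>x y. br (f x) (f y) = f (br x (f y) + br (f x) y - br x y))"

definition dual_bases :: "(complex \<Rightarrow> 'v::ab_group_add \<Rightarrow> 'v) \<Rightarrow> ('v \<Rightarrow> 'v \<Rightarrow> complex)
    \<Rightarrow> 'v list \<Rightarrow> 'v list \<Rightarrow> bool" where
  "dual_bases sc \<kappa> xs ys \<longleftrightarrow> length xs = length ys
     \<and> module.span sc (set xs) = UNIV \<and> module.span sc (set ys) = UNIV
     \<and> (\<forall>i<length xs. \<forall>j<length ys. \<kappa> (xs ! i) (ys ! j) = (if i = j then 1 else 0))"

definition some_dual_bases :: "(complex \<Rightarrow> 'v::ab_group_add \<Rightarrow> 'v) \<Rightarrow> ('v \<Rightarrow> 'v \<Rightarrow> complex)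
    \<Rightarrow> 'v list \<times> 'v list" where
  "some_dual_bases sc \<kappa> = (SOME p. dual_bases sc \<kappa> (fst p) (snd p))"

text \<open>The r-matrix r = sum_a x_a (x) f(x^a).\<close>
definition r_matrix :: "(complex \<Rightarrow> 'v::ab_group_add \<Rightarrow> 'v) \<Rightarrow> ('v \<Rightarrow> 'v \<Rightarrow> complex)
    \<Rightarrow> ('v \<Rightarrow> 'v) \<Rightarrow> 'v tensor2" where
  "r_matrix sc \<kappa> f \<alpha> \<beta> =
     (let xs = fst (some_dual_bases sc \<kappa>); ys = snd (some_dual_bases sc \<kappa>)
      in (\<Sum>a<length xs. \<alpha> (xs ! a) * \<beta> (f (ys ! a))))"

text \<open>Cobracket delta(x) = [x (x) 1 + 1 (x) x, r] = (ad_x (x) 1 + 1 (x) ad_x) r.\<close>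
definition cobracket :: "(complex \<Rightarrow> 'v::ab_group_add \<Rightarrow> 'v) \<Rightarrow> ('v \<Rightarrow> 'v \<Rightarrow> 'v)
    \<Rightarrow> ('v \<Rightarrow> 'v \<Rightarrow> complex) \<Rightarrow> ('v \<Rightarrow> 'v) \<Rightarrow> 'v \<Rightarrow> 'v tensor2" where
  "cobracket sc br \<kappa> f x \<alpha> \<beta> =
     r_matrix sc \<kappa> f (\<lambda>v. \<alpha> (br x v)) \<beta> + r_matrix sc \<kappa> f \<alpha> (\<lambda>v. \<beta> (br x v))"

definition bracket_f :: "('v::ab_group_add \<Rightarrow> 'v \<Rightarrow> 'v) \<Rightarrow> ('v \<Rightarrow> 'v) \<Rightarrow> 'v \<Rightarrow> 'v \<Rightarrow> 'v" where
  "bracket_f br f x y = br x (f y) + br (f x) y - br x y"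

text \<open>Cobracket of g_f: transpose via kappa of the bracket of g, i.e. the unique tensor
delta_f(x) with (kappa (x) kappa)(delta_f(x), y (x) z) = kappa x [y,z]; in dual bases
delta_f(x) = sum_{a,b} kappa x [x_a, x_b] x^a (x) x^b.\<close>
definition cobracket_f :: "(complex \<Rightarrow> 'v::ab_group_add \<Rightarrow> 'v) \<Rightarrow> ('v \<Rightarrow> 'v \<Rightarrow> 'v)
    \<Rightarrow> ('v \<Rightarrow> 'v \<Rightarrow> complex) \<Rightarrow> 'v \<Rightarrow> 'v tensor2" where
  "cobracket_f sc br \<kappa> x \<alpha> \<beta> =
     (let xs = fst (some_dual_bases sc \<kappa>); ys = snd (some_dual_bases sc \<kappa>)
      in (\<Sum>a<length xs. \<Sum>b<length xs. \<kappa> x (br (xs ! a) (xs ! b)) * \<alpha> (ys ! a) * \<beta> (ys ! b)))"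

text \<open>The pushforward (phi (x) phi) t evaluated at
(alpha, beta) is t (alpha o phi) (beta o phi).\<close>
definition lie_bialg_hom :: "(complex \<Rightarrow> 'v::ab_group_add \<Rightarrow> 'v) \<Rightarrow> (complex \<Rightarrow> 'w::ab_group_add \<Rightarrow> 'w)
    \<Rightarrow> ('v \<Rightarrow> 'v \<Rightarrow> 'v) \<Rightarrow> ('v \<Rightarrow> 'v tensor2) \<Rightarrow> ('w \<Rightarrow> 'w \<Rightarrow> 'w) \<Rightarrow> ('w \<Rightarrow> 'w tensor2)
    \<Rightarrow> ('v \<Rightarrow> 'w) \<Rightarrow> bool" where
  "lie_bialg_hom sc1 sc2 br1 d1 br2 d2 \<phi> \<longleftrightarrow> Vector_Spaces.linear sc1 sc2 \<phi>
     \<and> (\<forall>x y. \<phi> (br1 x y) = br2 (\<phi> x) (\<phi> y))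
     \<and> (\<forall>x \<alpha> \<beta>. lin_functional sc2 \<alpha> \<longrightarrow> lin_functional sc2 \<beta> \<longrightarrow>
          d1 x (\<lambda>v. \<alpha> (\<phi> v)) (\<lambda>v. \<beta> (\<phi> v)) = d2 (\<phi> x) \<alpha> \<beta>)"

definition cop :: "('v \<Rightarrow> 'v tensor2) \<Rightarrow> 'v \<Rightarrow> 'v tensor2" where
  "cop d x \<alpha> \<beta> = - d x \<alpha> \<beta>"

end

theory Submission
  imports Defs
begin


lemma linD: "Vector_Spaces.linear s1 s2 f \<Longrightarrow> f (x + y) = f x + f y \<and> f (s1 c x) = s2 c (f x)"
  unfolding Vector_Spaces.linear_iff by blast

locale qform = vector_space sc for sc :: "complex \<Rightarrow> 'v::ab_group_add \<Rightarrow> 'v" +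
  fixes \<kappa> :: "'v \<Rightarrow> 'v \<Rightarrow> complex"
  assumes lin: "\<And>x. lin_functional sc (\<kappa> x)"
    and sym: "\<And>x y. \<kappa> x y = \<kappa> y x"
    and nondeg: "\<And>x. (\<And>y. \<kappa> x y = 0) \<Longrightarrow> x = 0"
begin

lemma k_add2: "\<kappa> x (a + b) = \<kappa> x a + \<kappa> x b"
  using lin[of x] unfolding lin_functional_def by (simp add: linD)
lemma k_scale2: "\<kappa> x (sc c a) = c * \<kappa> x a"
  using lin[of x] unfolding lin_functional_def by (simp add: linD)
lemma k_add1: "\<kappa> (a + b) x = \<kappa> a x + \<kappa> b x"
  using k_add2[of x a b] sym[of "a+b" x] sym[of a x] sym[of b x] by simp
lemma k_scale1: "\<kappa> (sc c a) x = c * \<kappa> a x"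
  using k_scale2[of x c a] sym[of "sc c a" x] sym[of a x] by simp
lemma k_02: "\<kappa> x 0 = 0"
  using k_add2[of x 0 0] by simp
lemma k_01: "\<kappa> 0 x = 0"
  using k_02[of x] sym[of 0 x] by simp
lemma k_diff2: "\<kappa> x (a - b) = \<kappa> x a - \<kappa> x b"
  using k_add2[of x "a - b" b] by (simp add: algebra_simps)
lemma k_diff1: "\<kappa> (a - b) x = \<kappa> a x - \<kappa> b x"
  using k_diff2[of x a b] sym[of "a-b" x] sym[of a x] sym[of b x] by simp
lemma k_neg2: "\<kappa> x (- a) = - \<kappa> x a"
  using k_diff2[of x 0 a] k_02 by simp
lemma k_neg1: "\<kappa> (- a) x = - \<kappa> a x"
  using k_neg2[of x a] sym[of "-a" x] sym[of a x] by simp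
lemma k_sum2: "\<kappa> x (sum g A) = (\<Sum>a\<in>A. \<kappa> x (g a))"
  by (induct A rule: infinite_finite_induct) (simp_all add: k_02 k_add2)
lemma k_sum1: "\<kappa> (sum g A) x = (\<Sum>a\<in>A. \<kappa> (g a) x)"
  by (induct A rule: infinite_finite_induct) (simp_all add: k_01 k_add1)

lemmas k_simps = k_add2 k_scale2 k_add1 k_scale1 k_02 k_01 k_diff2 k_diff1 k_neg2 k_neg1 k_sum1 k_sum2

lemma unique: "(\<And>v. \<kappa> v a = \<kappa> v b) \<Longrightarrow> a = b"
proof -
  assume h: "\<And>v. \<kappa> v a = \<kappa> v b"
  have "a - b = 0"
  proof (rule nondeg)
    fix y show "\<kappa> (a - b) y = 0" using h[of y] by (simp add: k_diff2 sym[of _ y])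
  qed
  then show ?thesis by simp
qed

lemma vanish_span: assumes "\<And>z. z \<in> S \<Longrightarrow> \<kappa> w z = 0" and "v \<in> span S" shows "\<kappa> w v = 0"
  using assms(2) by (induct rule: span_induct_alt) (auto simp: k_simps assms(1))

lemma dual_sym: "dual_bases sc \<kappa> xs ys \<Longrightarrow> dual_bases sc \<kappa> ys xs"
  unfolding dual_bases_def by (metis sym)

lemma expand: assumes d: "dual_bases sc \<kappa> xs ys"
  shows "v = (\<Sum>a<length xs. sc (\<kappa> v (ys!a)) (xs!a))"
proof -
  define w where "w = v - (\<Sum>a<length xs. sc (\<kappa> v (ys!a)) (xs!a))"
  have len: "length ys = length xs" and sp: "span (set ys) = UNIV"
    and dl: "\<And>i j. i < length xs \<Longrightarrow> j < length xs \<Longrightarrow> \<kappa> (xs!i) (ys!j) = (if i = j then 1 else 0)"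
    using d unfolding dual_bases_def by auto
  have "\<kappa> w z = 0" if zin: "z \<in> set ys" for z
  proof -
    obtain b where b: "b < length xs" "z = ys!b" using zin len by (metis in_set_conv_nth)
    have "(\<Sum>a<length xs. \<kappa> v (ys!a) * \<kappa> (xs!a) (ys!b)) = (\<Sum>a<length xs. if a = b then \<kappa> v (ys!b) else 0)"
      by (rule sum.cong) (auto simp: dl b)
    also have "\<dots> = \<kappa> v (ys!b)" using b by simp
    finally show ?thesis unfolding w_def b by (simp add: k_simps)
  qed
  then have "\<And>y. \<kappa> w y = 0" using vanish_span sp by blast
  then have "w = 0" by (rule nondeg)
  then show ?thesis unfolding w_def by simp
qed

lemma riesz: assumes d: "dual_bases sc \<kappa> xs ys" and l: "lin_functional sc l"
  shows "l v = \<kappa> v (\<Sum>a<length xs. sc (l (xs!a)) (ys!a))"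
proof -
  have ad: "l (a + b) = l a + l b" "l (sc c a) = c * l a" for a b c
    using l unfolding lin_functional_def by (simp_all add: linD)
  have l0: "l 0 = 0" using ad(1)[of 0 0] by simp
  have ls: "l (sum g A) = (\<Sum>a\<in>A. l (g a))" for g and A :: "'x set"
    by (induct A rule: infinite_finite_induct) (auto simp: ad l0)
  have "l v = l (\<Sum>a<length xs. sc (\<kappa> v (ys!a)) (xs!a))" by (rule arg_cong[where f=l], rule expand[OF d])
  also have "\<dots> = (\<Sum>a<length xs. \<kappa> v (ys!a) * l (xs!a))" by (simp add: ls ad)
  also have "\<dots> = \<kappa> v (\<Sum>a<length xs. sc (l (xs!a)) (ys!a))"
    by (simp add: k_sum2 k_scale2 mult.commute)
  finally show ?thesis .
qed


lemma indep_coeffs: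
  assumes "independent B" "finite B" "(\<Sum>v\<in>B. sc (u v) v) = 0" "v \<in> B"
  shows "u v = 0"
  using assms dependent_finite by blast

lemma dual_exists:
  assumes fd: "finite_dimensional_vector_space sc B"
  shows "\<exists>xs ys. dual_bases sc \<kappa> xs ys"
proof -
  interpret F: finite_dimensional_vector_space sc B by fact
  have fB: "finite B" and iB: "independent B" and sB: "span B = UNIV"
    using F.finite_Basis F.independent_Basis F.span_Basis by auto
  have van: "v = 0" if "\<And>b. b \<in> B \<Longrightarrow> \<kappa> b v = 0" for v
  proof (rule nondeg)
    fix z
    have "z \<in> span B" using sB by simp
    then show "\<kappa> v z = 0" by (rule vanish_span[rotated]) (use that sym in auto)
  qed
  define T where "T v = (\<Sum>b\<in>B. sc (\<kappa> b v) b)" for v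
  have Tlin: "Vector_Spaces.linear sc sc T"
    unfolding Vector_Spaces.linear_iff
  proof (intro conjI allI)
    show "vector_space sc" by (rule vector_space_axioms)
    show "vector_space sc" by (rule vector_space_axioms)
    fix x y c
    show "T (x + y) = T x + T y"
      unfolding T_def by (simp add: k_add2 scale_left_distrib sum.distrib)
    show "T (sc c x) = sc c (T x)"
      unfolding T_def by (simp add: k_scale2 scale_sum_right)
  qed
  have T0: "v = 0" if "T v = 0" for v
  proof (rule van)
    fix b assume "b \<in> B"
    then show "\<kappa> b v = 0" using indep_coeffs[OF iB fB that[unfolded T_def]] by simp
  qed
  have Tdiff: "T (x - y) = T x - T y" for x y
    unfolding T_def by (simp add: k_diff2 scale_left_diff_distrib sum_subtractf)
  have "inj T"
  proof (rule injI)
    fix x y assume "T x = T y"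
    then have "T (x - y) = 0" by (simp add: Tdiff)
    then show "x = y" using T0 by fastforce
  qed
  then have "surj T" using F.linear_inj_imp_surj Tlin by blast
  then obtain y where y: "\<And>b. T (y b) = b" by (metis surjD)
  have dl: "\<kappa> b' (y b) = (if b' = b then 1 else 0)" if "b \<in> B" "b' \<in> B" for b b'
  proof -
    have e: "(\<Sum>v\<in>B. sc (if v = b then 1 else 0) v) = b"
    proof -
      have "(\<Sum>v\<in>B. sc (if v = b then 1 else 0) v) = (\<Sum>v\<in>B. if v = b then b else 0)"
        by (rule sum.cong) auto
      also have "\<dots> = b" using that fB by simp
      finally show ?thesis .
    qed
    have "(\<Sum>v\<in>B. sc (\<kappa> v (y b) - (if v = b then 1 else 0)) v) = T (y b) - (\<Sum>v\<in>B. sc (if v = b then 1 else 0) v)"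
      unfolding T_def by (simp add: scale_left_diff_distrib sum_subtractf)
    also have "\<dots> = 0" using y e by simp
    finally have "\<kappa> b' (y b) - (if b' = b then 1 else 0) = 0"
      by (rule indep_coeffs[OF iB fB _ that(2)])
    then show ?thesis by simp
  qed
  obtain xs where xs: "set xs = B" "distinct xs" using finite_distinct_list[OF fB] by blast
  define ys where "ys = map y xs"
  have "span (set ys) = UNIV"
  proof -
    have "v \<in> span (set ys)" for v
    proof -
      define w where "w = v - (\<Sum>b\<in>B. sc (\<kappa> b v) (y b))"
      have "\<kappa> b' w = 0" if "b' \<in> B" for b'
      proof -
        have "(\<Sum>b\<in>B. \<kappa> b v * \<kappa> b' (y b)) = (\<Sum>b\<in>B. if b = b' then \<kappa> b' v else 0)"
          by (rule sum.cong) (auto simp: dl that)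
        also have "\<dots> = \<kappa> b' v" using that fB by simp
        finally show ?thesis unfolding w_def by (simp add: k_simps)
      qed
      then have "w = 0" by (rule van)
      then have "v = (\<Sum>b\<in>B. sc (\<kappa> b v) (y b))" unfolding w_def by simp
      also have "\<dots> \<in> span (set ys)"
        unfolding ys_def
        apply (rule span_sum) apply (rule span_scale) apply (rule span_base) using xs by auto
      finally show ?thesis .
    qed
    then show ?thesis by auto
  qed
  moreover have "\<kappa> (xs ! i) (ys ! j) = (if i = j then 1 else 0)" if "i < length xs" "j < length xs" for i j
    using that xs unfolding ys_def by (auto simp: dl nth_eq_iff_index_eq)
  ultimately have "dual_bases sc \<kappa> xs ys"
    unfolding dual_bases_def ys_def using xs sB by auto
  then show ?thesis by blast
qed

end


locale msetup =
  fixes sc :: "complex \<Rightarrow> 'g::ab_group_add \<Rightarrow> 'g"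
    and br :: "'g \<Rightarrow> 'g \<Rightarrow> 'g" and \<kappa> :: "'g \<Rightarrow> 'g \<Rightarrow> complex" and f :: "'g \<Rightarrow> 'g"
    and scq :: "complex \<Rightarrow> 'q::ab_group_add \<Rightarrow> 'q" and \<pi> :: "'g \<Rightarrow> 'q"
  assumes fact: "factorizable sc br \<kappa> f"
    and quot_vs: "vector_space scq"
    and quot_lin: "Vector_Spaces.linear sc scq \<pi>"
    and quot_surj: "\<pi> ` range (\<lambda>x. f x - x) = UNIV"
    and quot_ker: "\<forall>x\<in>range (\<lambda>x. f x - x). \<pi> x = 0 \<longleftrightarrow> x \<in> perp \<kappa> (range (\<lambda>x. f x - x))"
begin

abbreviation "C \<equiv> range (\<lambda>x. f x - x)"

lemma vs: "vector_space sc" and lie: "lie_algebra sc br" and invf: "invariant_form sc br \<kappa>"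
  and fdim: "fin_dim_space sc" and flin: "Vector_Spaces.linear sc sc f"
  and fi: "\<And>x y. \<kappa> (f x) y + \<kappa> x (f y) = \<kappa> x y"
  and fii: "\<And>x y. br (f x) (f y) = f (br x (f y) + br (f x) y - br x y)"
  using fact unfolding factorizable_def quadratic_lie_algebra_def lie_algebra_def by auto

sublocale G: qform sc \<kappa>
proof -
  interpret vector_space sc by (rule vs)
  show "qform sc \<kappa>"
    by unfold_locales (use invf in \<open>auto simp: invariant_form_def\<close>)
qed

lemma inv: "\<kappa> (br x y) z = \<kappa> x (br y z)"
  using invf unfolding invariant_form_def by blast

lemma br_lin2: "Vector_Spaces.linear sc sc (br x)" and br_lin1: "Vector_Spaces.linear sc sc (\<lambda>a. br a x)"
  using lie unfolding lie_algebra_def by auto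
lemma br_add2: "br x (a + b) = br x a + br x b" and br_scale2: "br x (sc c a) = sc c (br x a)"
  using linD[OF br_lin2] by auto
lemma br_add1: "br (a + b) x = br a x + br b x" and br_scale1: "br (sc c a) x = sc c (br a x)"
  using linD[OF br_lin1[of x]] by auto
lemma alt: "br x x = 0" and jac: "br x (br y z) + br y (br z x) + br z (br x y) = 0"
  using lie unfolding lie_algebra_def by auto
lemma br_02: "br x 0 = 0" using br_add2[of x 0 0] by simp
lemma br_01: "br 0 x = 0" using br_add1[of 0 0 x] by simp
lemma br_diff2: "br x (a - b) = br x a - br x b"
  using br_add2[of x "a - b" b] by (simp add: algebra_simps)
lemma br_diff1: "br (a - b) x = br a x - br b x"
  using br_add1[of "a - b" b x] by (simp add: algebra_simps)
lemma br_neg2: "br x (- a) = - br x a" using br_diff2[of x 0 a] by (simp add: br_02)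
lemma br_neg1: "br (- a) x = - br a x" using br_diff1[of 0 a x] by (simp add: br_01)
lemma anti: "br x y = - br y x"
proof -
  have "0 = br (x + y) (x + y)" by (simp add: alt)
  also have "\<dots> = br x x + br x y + (br y x + br y y)" by (simp only: br_add1 br_add2 add_ac)
  also have "\<dots> = br x y + br y x" by (simp add: alt)
  finally have "br x y + br y x = 0" by (rule sym)
  then show ?thesis by (metis eq_neg_iff_add_eq_0)
qed

lemma f_add: "f (a + b) = f a + f b" and f_scale: "f (sc c a) = sc c (f a)"
  using flin by (auto simp: linD)
lemma f_0: "f 0 = 0" using f_add[of 0 0] by simp
lemma f_diff: "f (a - b) = f a - f b" using f_add[of "a - b" b] by (simp add: algebra_simps)
lemma f_neg: "f (- a) = - f a" using f_diff[of 0 a] by (simp add: f_0)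

lemma pi_add: "\<pi> (a + b) = \<pi> a + \<pi> b" and pi_scale: "\<pi> (sc c a) = scq c (\<pi> a)"
  using quot_lin by (auto simp: linD)
lemma pi_0: "\<pi> 0 = 0" using pi_add[of 0 0] by simp
lemma pi_diff: "\<pi> (a - b) = \<pi> a - \<pi> b" using pi_add[of "a - b" b] by (simp add: algebra_simps)
lemma pi_neg: "\<pi> (- a) = - \<pi> a" using pi_diff[of 0 a] by (simp add: pi_0)

lemmas lin_simps = br_add2 br_scale2 br_add1 br_scale1 br_02 br_01 br_diff2 br_diff1 br_neg2 br_neg1
  f_add f_scale f_0 f_diff f_neg pi_add pi_scale pi_0 pi_diff pi_neg G.k_simps

lemma C_add: "a \<in> C \<Longrightarrow> b \<in> C \<Longrightarrow> a + b \<in> C"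
proof -
  assume "a \<in> C" "b \<in> C"
  then obtain u v where "a = f u - u" "b = f v - v" by auto
  then have "a + b = f (u + v) - (u + v)" by (simp add: f_add algebra_simps)
  then show ?thesis by blast
qed
lemma C_scale: "a \<in> C \<Longrightarrow> sc c a \<in> C"
proof -
  assume "a \<in> C"
  then obtain u where "a = f u - u" by auto
  then have "sc c a = f (sc c u) - sc c u" by (simp add: f_scale G.scale_right_diff_distrib)
  then show ?thesis by blast
qed
lemma C_neg: "a \<in> C \<Longrightarrow> - a \<in> C"
proof -
  assume "a \<in> C"
  then obtain u where "a = f u - u" by auto
  then have "- a = f (- u) - (- u)" by (simp add: f_neg)
  then show ?thesis by blast
qed
lemma C_diff: "a \<in> C \<Longrightarrow> b \<in> C \<Longrightarrow> a - b \<in> C"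
  using C_add[OF _ C_neg[of b], of a] by simp
lemma C_0: "0 \<in> C"
proof -
  have "0 = f 0 - 0" by (simp add: f_0)
  then show ?thesis by blast
qed

lemma perp_C: "perp \<kappa> C = {x. f x = 0}"
proof -
  have e: "\<kappa> x (f v - v) = - \<kappa> (f x) v" for x v
    using fi[of x v] by (simp add: G.k_diff2 algebra_simps)
  have "x \<in> perp \<kappa> C \<longleftrightarrow> (\<forall>v. \<kappa> (f x) v = 0)" for x
    unfolding perp_def by (auto simp: e)
  also have "(\<forall>v. \<kappa> (f x) v = 0) \<longleftrightarrow> f x = 0" for x
  proof
    assume "\<forall>v. \<kappa> (f x) v = 0" then show "f x = 0" by (intro G.nondeg) simp
  qed (simp add: G.k_01)
  finally show ?thesis by auto
qed

lemma kerC: "f x = 0 \<Longrightarrow> x \<in> C"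
proof -
  assume "f x = 0"
  then have "x = f (- x) - (- x)" by (simp add: f_neg)
  then show ?thesis by blast
qed

lemma fC: "x \<in> C \<Longrightarrow> f x \<in> C"
proof -
  assume "x \<in> C"
  then obtain u where "x = f u - u" by auto
  then have "f x = f (f u) - f u" by (simp add: f_diff)
  then show ?thesis by blast
qed

lemma brf: "f (bracket_f br f a b) - bracket_f br f a b = br (f a - a) (f b - b)"
  unfolding bracket_f_def fii[symmetric] by (simp add: br_diff1 br_diff2 algebra_simps)

lemma brC: "x \<in> C \<Longrightarrow> y \<in> C \<Longrightarrow> br x y \<in> C"
proof -
  assume "x \<in> C" "y \<in> C"
  then obtain a b where "x = f a - a" "y = f b - b" by auto
  then have "br x y = f (bracket_f br f a b) - bracket_f br f a b" by (simp add: brf)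
  then show ?thesis by blast
qed

lemma brK2: "c \<in> C \<Longrightarrow> f k = 0 \<Longrightarrow> f (br c k) = 0"
proof -
  assume "c \<in> C" "f k = 0"
  then obtain a where a: "c = f a - a" by auto
  have "bracket_f br f a k = br c k" unfolding bracket_f_def a using \<open>f k = 0\<close>
    by (simp add: br_02 br_diff1)
  moreover have "f (bracket_f br f a k) = br (f a) (f k)"
    unfolding bracket_f_def by (rule fii[symmetric])
  ultimately show ?thesis using \<open>f k = 0\<close> by (simp add: br_02)
qed
lemma brK1: "c \<in> C \<Longrightarrow> f k = 0 \<Longrightarrow> f (br k c) = 0"
  using brK2 anti[of k c] by (simp add: f_neg)

lemma piK: "x \<in> C \<Longrightarrow> \<pi> x = 0 \<longleftrightarrow> f x = 0"
  using quot_ker perp_C by auto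

definition s :: "'q \<Rightarrow> 'g" where "s u = (SOME x. x \<in> C \<and> \<pi> x = u)"
lemma s_C: "s u \<in> C" and s_pi: "\<pi> (s u) = u"
proof -
  have "u \<in> \<pi> ` C" unfolding quot_surj by (rule UNIV_I)
  then obtain x where "x \<in> C" "u = \<pi> x" by (rule imageE)
  then have "\<exists>x. x \<in> C \<and> \<pi> x = u" by blast
  then have "s u \<in> C \<and> \<pi> (s u) = u" unfolding s_def by (rule someI_ex)
  then show "s u \<in> C" "\<pi> (s u) = u" by auto
qed

lemma lift: obtains x where "x \<in> C" "u = \<pi> x"
  using s_C s_pi by metis

lemma sK: "x \<in> C \<Longrightarrow> f (s (\<pi> x) - x) = 0"
  using piK[of "s (\<pi> x) - x"] C_diff[OF s_C] by (simp add: pi_diff s_pi)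

lemma perpK: "f k = 0 \<Longrightarrow> c \<in> C \<Longrightarrow> \<kappa> k c = 0"
  using perp_C unfolding perp_def by blast

definition "brq u v = \<pi> (br (s u) (s v))"
definition "\<kappa>q u v = \<kappa> (s u) (s v)"
definition "fq u = \<pi> (f (s u))"

lemma brq_pi: assumes "x \<in> C" "y \<in> C" shows "brq (\<pi> x) (\<pi> y) = \<pi> (br x y)"
proof -
  define k1 where "k1 = s (\<pi> x) - x"
  define k2 where "k2 = s (\<pi> y) - y"
  have k: "f k1 = 0" "f k2 = 0" using sK assms unfolding k1_def k2_def by auto
  have e: "s (\<pi> x) = x + k1" "s (\<pi> y) = y + k2" unfolding k1_def k2_def by simp_all
  have "br (s (\<pi> x)) (s (\<pi> y)) = br x (s (\<pi> y)) + br k1 (s (\<pi> y))"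
    unfolding e(1) by (rule br_add1)
  also have "br x (s (\<pi> y)) = br x y + br x k2" unfolding e(2) by (rule br_add2)
  finally have "br (s (\<pi> x)) (s (\<pi> y)) = br x y + (br k1 (s (\<pi> y)) + br x k2)"
    by (simp only: add_ac)
  moreover have "f (br k1 (s (\<pi> y)) + br x k2) = 0"
    using brK1[OF s_C k(1)] brK2[OF assms(1) k(2)] by (simp add: f_add)
  moreover have "br k1 (s (\<pi> y)) + br x k2 \<in> C"
    by (rule C_add[OF brC[OF kerC[OF k(1)] s_C] brC[OF assms(1) kerC[OF k(2)]]])
  ultimately show ?thesis unfolding brq_def using piK[of "br k1 (s (\<pi> y)) + br x k2"] by (simp add: pi_add)
qed

lemma kq_pi: assumes "x \<in> C" "y \<in> C" shows "\<kappa>q (\<pi> x) (\<pi> y) = \<kappa> x y"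
proof -
  define k1 where "k1 = s (\<pi> x) - x"
  define k2 where "k2 = s (\<pi> y) - y"
  have k: "f k1 = 0" "f k2 = 0" using sK assms unfolding k1_def k2_def by auto
  have e: "s (\<pi> x) = x + k1" "s (\<pi> y) = y + k2" unfolding k1_def k2_def by simp_all
  have "\<kappa> (s (\<pi> x)) (s (\<pi> y)) = \<kappa> x (s (\<pi> y)) + \<kappa> k1 (s (\<pi> y))"
    unfolding e(1) by (rule G.k_add1)
  also have "\<kappa> x (s (\<pi> y)) = \<kappa> x y + \<kappa> k2 x" unfolding e(2) G.k_add2 G.sym[of x k2] ..
  finally have "\<kappa> (s (\<pi> x)) (s (\<pi> y)) = \<kappa> x y + (\<kappa> k1 (s (\<pi> y)) + \<kappa> k2 x)"
    by (simp only: add_ac)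
  moreover have "\<kappa> k1 (s (\<pi> y)) = 0" "\<kappa> k2 x = 0" using perpK k s_C assms by auto
  ultimately show ?thesis unfolding \<kappa>q_def by simp
qed

lemma fq_pi: assumes "x \<in> C" shows "fq (\<pi> x) = \<pi> (f x)"
proof -
  have "f (s (\<pi> x)) = f x + f (s (\<pi> x) - x)" by (simp add: f_diff)
  then show ?thesis unfolding fq_def using sK[OF assms] by (simp add: f_0)
qed

end


context msetup begin

lemma Q_all3: "(\<And>a b c. a \<in> C \<Longrightarrow> b \<in> C \<Longrightarrow> c \<in> C \<Longrightarrow> P (\<pi> a) (\<pi> b) (\<pi> c)) \<Longrightarrow> P u v w"
  by (metis s_C s_pi)

lemma pi_fold: "\<pi> a + \<pi> b = \<pi> (a + b)" "scq c (\<pi> a) = \<pi> (sc c a)" "\<pi> a - \<pi> b = \<pi> (a - b)"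
  "- \<pi> a = \<pi> (- a)"
  by (simp_all add: pi_add pi_scale pi_diff pi_neg)

lemmas qsimps = brq_pi kq_pi fq_pi pi_fold C_add C_scale C_diff C_neg brC fC C_0 pi_0
  br_add2 br_scale2 br_add1 br_scale1 br_02 br_01 br_diff2 br_diff1 br_neg2 br_neg1
  f_add f_scale f_0 f_diff f_neg G.k_simps

lemma brq_add2: "brq u (v + w) = brq u v + brq u w"
  by (rule Q_all3[of "\<lambda>u v w. brq u (v + w) = brq u v + brq u w"]) (simp add: qsimps)
lemma brq_add1: "brq (v + w) u = brq v u + brq w u"
  by (rule Q_all3[of "\<lambda>u v w. brq (v + w) u = brq v u + brq w u"]) (simp add: qsimps)
lemma brq_scale2: "brq u (scq c v) = scq c (brq u v)"
  by (rule Q_all3[of "\<lambda>u v w. brq u (scq c v) = scq c (brq u v)" _ _ 0]) (simp add: qsimps)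
lemma brq_scale1: "brq (scq c v) u = scq c (brq v u)"
  by (rule Q_all3[of "\<lambda>u v w. brq (scq c v) u = scq c (brq v u)" _ _ 0]) (simp add: qsimps)
lemma brq_alt: "brq u u = 0"
  by (rule Q_all3[of "\<lambda>u v w. brq u u = 0" _ 0 0]) (simp add: qsimps alt)
lemma brq_jac: "brq u (brq v w) + brq v (brq w u) + brq w (brq u v) = 0"
  by (rule Q_all3[of "\<lambda>u v w. brq u (brq v w) + brq v (brq w u) + brq w (brq u v) = 0"]) (simp add: qsimps jac)
lemma kq_add2: "\<kappa>q u (v + w) = \<kappa>q u v + \<kappa>q u w"
  by (rule Q_all3[of "\<lambda>u v w. \<kappa>q u (v + w) = \<kappa>q u v + \<kappa>q u w"]) (simp add: qsimps)
lemma kq_scale2: "\<kappa>q u (scq c v) = c * \<kappa>q u v"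
  by (rule Q_all3[of "\<lambda>u v w. \<kappa>q u (scq c v) = c * \<kappa>q u v" _ _ 0]) (simp add: qsimps)
lemma kq_sym: "\<kappa>q u v = \<kappa>q v u"
  by (rule Q_all3[of "\<lambda>u v w. \<kappa>q u v = \<kappa>q v u" _ _ 0]) (simp add: qsimps G.sym)
lemma kq_inv: "\<kappa>q (brq u v) w = \<kappa>q u (brq v w)"
  by (rule Q_all3[of "\<lambda>u v w. \<kappa>q (brq u v) w = \<kappa>q u (brq v w)"]) (simp add: qsimps inv)
lemma fq_add: "fq (u + v) = fq u + fq v"
  by (rule Q_all3[of "\<lambda>u v w. fq (u + v) = fq u + fq v" _ _ 0]) (simp add: qsimps)
lemma fq_scale: "fq (scq c u) = scq c (fq u)"
  by (rule Q_all3[of "\<lambda>u v w. fq (scq c u) = scq c (fq u)" _ 0 0]) (simp add: qsimps)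
lemma fq_i: "\<kappa>q (fq u) v + \<kappa>q u (fq v) = \<kappa>q u v"
  by (rule Q_all3[of "\<lambda>u v w. \<kappa>q (fq u) v + \<kappa>q u (fq v) = \<kappa>q u v" _ _ 0]) (simp add: qsimps fi)
lemma fq_ii: "brq (fq u) (fq v) = fq (brq u (fq v) + brq (fq u) v - brq u v)"
  by (rule Q_all3[of "\<lambda>u v w. brq (fq u) (fq v) = fq (brq u (fq v) + brq (fq u) v - brq u v)" _ _ 0])
    (simp add: qsimps fii)

lemma kq_nondeg: assumes "\<And>v. \<kappa>q u v = 0" shows "u = 0"
proof -
  have "\<kappa> (s u) b = 0" if "b \<in> C" for b
    using assms[of "\<pi> b"] kq_pi[OF s_C that] s_pi[of u] by metis
  then have "s u \<in> perp \<kappa> C" unfolding perp_def by blast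
  then have "\<pi> (s u) = 0" using quot_ker s_C by blast
  then show ?thesis by (simp add: s_pi)
qed

lemma vs_mult: "vector_space ((*) :: complex \<Rightarrow> complex \<Rightarrow> complex)"
  using G.lin[of 0] unfolding lin_functional_def Vector_Spaces.linear_iff by blast

lemma Q_lin_kq: "lin_functional scq (\<kappa>q u)"
  unfolding lin_functional_def Vector_Spaces.linear_iff
  using quot_vs vs_mult kq_add2 kq_scale2 by blast

lemma Qform: "qform scq \<kappa>q"
  unfolding qform_def qform_axioms_def using quot_vs Q_lin_kq kq_sym kq_nondeg by blast

lemma Q_fin: "fin_dim_space scq"
proof -
  obtain B where B: "finite_dimensional_vector_space sc B" using fdim unfolding fin_dim_space_def by blast
  interpret F: finite_dimensional_vector_space sc B by (rule B)
  interpret Q: vector_space scq by (rule quot_vs)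
  interpret P: vector_space_pair sc scq by unfold_locales
  have "Q.span (\<pi> ` B) = \<pi> ` (G.span B)" by (rule P.linear_span_image[OF quot_lin])
  also have "\<dots> = \<pi> ` UNIV" using F.span_Basis by simp
  also have "\<dots> = UNIV" using quot_surj by auto
  finally have sp: "Q.span (\<pi> ` B) = UNIV" .
  obtain B' where B': "B' \<subseteq> \<pi> ` B" "Q.independent B'" "\<pi> ` B \<subseteq> Q.span B'"
    by (rule Q.maximal_independent_subset)
  have "finite B'" using B'(1) F.finite_Basis finite_subset by blast
  moreover have "Q.span B' = UNIV"
    using Q.span_mono[OF B'(3)] sp Q.span_span by auto
  ultimately have "finite_dimensional_vector_space scq B'"
    unfolding finite_dimensional_vector_space_def finite_dimensional_vector_space_axioms_def
    using quot_vs B'(2) by blast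
  then show ?thesis unfolding fin_dim_space_def by blast
qed

lemma Q_fact: "factorizable scq brq \<kappa>q fq"
proof -
  have lie: "lie_algebra scq brq"
    unfolding lie_algebra_def Vector_Spaces.linear_iff
    using quot_vs brq_add2 brq_add1 brq_scale1 brq_scale2 brq_alt brq_jac by blast
  have inv: "invariant_form scq brq \<kappa>q"
    unfolding invariant_form_def using Q_lin_kq kq_sym kq_inv kq_nondeg by blast
  have fl: "Vector_Spaces.linear scq scq fq"
    unfolding Vector_Spaces.linear_iff using quot_vs fq_add fq_scale by blast
  show ?thesis
    unfolding factorizable_def quadratic_lie_algebra_def
    using Q_fin lie inv fl fq_i fq_ii by blast
qed

end


lemma lin_sum: "Vector_Spaces.linear s1 s2 h \<Longrightarrow> h (sum g A) = (\<Sum>a\<in>A. h (g a))"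
proof -
  assume l: "Vector_Spaces.linear s1 s2 h"
  have h0: "h 0 = 0" using linD[OF l, of 0 0] by simp
  show ?thesis by (induct A rule: infinite_finite_induct) (auto simp: h0 linD[OF l])
qed

context msetup begin

definition "\<phi> x = \<pi> (f x - x)"

lemma phi_lin: "Vector_Spaces.linear sc scq \<phi>"
  unfolding Vector_Spaces.linear_iff
proof (intro conjI allI)
  fix x y c
  have "f (x + y) - (x + y) = (f x - x) + (f y - y)" by (simp add: f_add algebra_simps)
  then show "\<phi> (x + y) = \<phi> x + \<phi> y" unfolding \<phi>_def by (simp only: pi_add)
  have "f (sc c x) - sc c x = sc c (f x - x)" by (simp add: f_scale G.scale_right_diff_distrib)
  then show "\<phi> (sc c x) = scq c (\<phi> x)" unfolding \<phi>_def by (simp only: pi_scale)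
qed (use vs quot_vs in auto)

lemma eC: "f x - x \<in> C" by blast

lemma phi_br: "\<phi> (bracket_f br f x y) = brq (\<phi> x) (\<phi> y)"
  unfolding \<phi>_def brf brq_pi[OF eC eC] ..

lemma final_id:
  fixes c d x :: 'g
  defines "e \<equiv> f x - x"
  shows "- \<kappa> x (br (f c) (f d)) = \<kappa> (f (br c e)) d + \<kappa> (br e (f c)) d"
proof -
  define Z where "Z = bracket_f br f c d"
  have t1: "\<kappa> (f (br c e)) d = \<kappa> (br c e) d - \<kappa> (br c e) (f d)"
    using fi[of "br c e" d] by (simp add: algebra_simps)
  have t2: "\<kappa> (br c e) d = \<kappa> e (br d c)"
    by (metis G.sym inv)
  have t3: "\<kappa> (br c e) (f d) = \<kappa> e (br (f d) c)"
    by (metis G.sym inv)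
  have t4: "\<kappa> (br e (f c)) d = \<kappa> e (br (f c) d)" by (rule inv)
  have "br d c - br (f d) c + br (f c) d = Z"
    unfolding Z_def bracket_f_def using anti[of d c] anti[of "f d" c] by (simp add: algebra_simps)
  then have s: "\<kappa> (f (br c e)) d + \<kappa> (br e (f c)) d = \<kappa> e Z"
    unfolding t1 t2 t3 t4 by (metis G.k_add2 G.k_diff2)
  have fZ: "f Z = br (f c) (f d)" unfolding Z_def bracket_f_def by (rule fii[symmetric])
  have "\<kappa> e Z = \<kappa> (f x) Z - \<kappa> x Z" unfolding e_def by (rule G.k_diff1)
  also have "\<dots> = - \<kappa> x (f Z)" using fi[of x Z] by (simp add: algebra_simps)
  finally show ?thesis using s fZ by simp
qed

end



context msetup begin

lemma br_sum1: "br (sum g A) y = (\<Sum>a\<in>A. br (g a) y)"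
  using lin_sum[OF br_lin1[of y]] .
lemma br_sum2: "br y (sum g A) = (\<Sum>a\<in>A. br y (g a))"
  using lin_sum[OF br_lin2[of y]] .

lemma some_db: "\<exists>xs ys. dual_bases sc' k xs ys \<Longrightarrow>
   dual_bases sc' k (fst (some_dual_bases sc' k)) (snd (some_dual_bases sc' k))"
proof -
  assume "\<exists>xs ys. dual_bases sc' k xs ys"
  then obtain xs ys where "dual_bases sc' k xs ys" by blast
  then have "\<exists>p. dual_bases sc' k (fst p) (snd p)" by (intro exI[of _ "(xs, ys)"]) simp
  then show ?thesis unfolding some_dual_bases_def by (rule someI_ex)
qed

lemma dg: "dual_bases sc \<kappa> (fst (some_dual_bases sc \<kappa>)) (snd (some_dual_bases sc \<kappa>))"
proof -
  obtain B where "finite_dimensional_vector_space sc B" using fdim unfolding fin_dim_space_def by blast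
  then show ?thesis by (intro some_db G.dual_exists)
qed

lemma dq: "dual_bases scq \<kappa>q (fst (some_dual_bases scq \<kappa>q)) (snd (some_dual_bases scq \<kappa>q))"
proof -
  interpret Q: qform scq \<kappa>q by (rule Qform)
  obtain B where "finite_dimensional_vector_space scq B" using Q_fin unfolding fin_dim_space_def by blast
  then show ?thesis by (intro some_db Q.dual_exists)
qed

lemma lf_phi: "lin_functional scq \<alpha> \<Longrightarrow> lin_functional sc (\<lambda>v. \<alpha> (\<phi> v))"
  unfolding lin_functional_def using Vector_Spaces.linear_compose[OF phi_lin] by (simp add: o_def)

lemma repr_g:
  assumes d: "dual_bases sc \<kappa> xs ys" and la: "lin_functional scq \<alpha>" and c: "c \<in> C"
    and r: "\<And>z. \<alpha> z = \<kappa>q z (\<pi> c)"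
  shows "(\<Sum>a<length xs. sc (\<alpha> (\<phi> (ys!a))) (xs!a)) = - f c"
proof (rule G.unique)
  fix v
  have len: "length ys = length xs" using d unfolding dual_bases_def by simp
  have "\<kappa> v (\<Sum>a<length xs. sc (\<alpha> (\<phi> (ys!a))) (xs!a)) = \<alpha> (\<phi> v)"
    using G.riesz[OF G.dual_sym[OF d] lf_phi[OF la], of v] len by simp
  also have "\<dots> = \<kappa>q (\<pi> (f v - v)) (\<pi> c)" unfolding \<phi>_def by (rule r)
  also have "\<dots> = \<kappa> (f v - v) c" by (rule kq_pi[OF eC c])
  also have "\<dots> = \<kappa> v (- f c)" using fi[of v c] by (simp add: G.k_diff1 G.k_neg2 algebra_simps)
  finally show "\<kappa> v (\<Sum>a<length xs. sc (\<alpha> (\<phi> (ys!a))) (xs!a)) = \<kappa> v (- f c)" .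
qed

lemma cobf_eq:
  assumes d: "dual_bases sc \<kappa> xs ys" and xs: "xs = fst (some_dual_bases sc \<kappa>)" and ys: "ys = snd (some_dual_bases sc \<kappa>)"
  shows "cobracket_f sc br \<kappa> x l m =
    \<kappa> x (br (\<Sum>a<length xs. sc (l (ys!a)) (xs!a)) (\<Sum>b<length xs. sc (m (ys!b)) (xs!b)))"
  unfolding cobracket_f_def Let_def xs[symmetric] ys[symmetric]
  by (simp add: br_sum1 br_sum2 br_scale1 br_scale2 G.k_sum2 G.k_scale2 sum_distrib_left mult_ac) (rule sum.swap)


lemma fq_lin: "Vector_Spaces.linear scq scq fq"
  unfolding Vector_Spaces.linear_iff using quot_vs fq_add fq_scale by blast
lemma brq_lin2: "Vector_Spaces.linear scq scq (brq y)"
  unfolding Vector_Spaces.linear_iff using quot_vs brq_add2 brq_scale2 by blast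

lemma rq_eq:
  assumes es: "es = fst (some_dual_bases scq \<kappa>q)" and es': "es' = snd (some_dual_bases scq \<kappa>q)"
    and la: "lin_functional scq a" and lb: "lin_functional scq b"
  shows "r_matrix scq \<kappa>q fq a b = b (fq (\<Sum>i<length es. scq (a (es!i)) (es'!i)))"
proof -
  have l: "Vector_Spaces.linear scq (*) (b \<circ> fq)"
    using Vector_Spaces.linear_compose[OF fq_lin] lb unfolding lin_functional_def by blast
  have "b (fq (\<Sum>i<length es. scq (a (es!i)) (es'!i))) = (\<Sum>i<length es. (b \<circ> fq) (scq (a (es!i)) (es'!i)))"
    using lin_sum[OF l] by simp
  also have "\<dots> = (\<Sum>i<length es. a (es!i) * b (fq (es'!i)))"
    using linD[OF l] by simp
  finally show ?thesis unfolding r_matrix_def Let_def es[symmetric] es'[symmetric] by simp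
qed

lemma cob:
  assumes la: "lin_functional scq \<alpha>" and lb: "lin_functional scq \<beta>"
  shows "cop (cobracket_f sc br \<kappa>) x (\<lambda>v. \<alpha> (\<phi> v)) (\<lambda>v. \<beta> (\<phi> v)) = cobracket scq brq \<kappa>q fq (\<phi> x) \<alpha> \<beta>"
proof -
  interpret Q: qform scq \<kappa>q by (rule Qform)
  define xs where "xs = fst (some_dual_bases sc \<kappa>)"
  define ys where "ys = snd (some_dual_bases sc \<kappa>)"
  define es where "es = fst (some_dual_bases scq \<kappa>q)"
  define es' where "es' = snd (some_dual_bases scq \<kappa>q)"
  have d: "dual_bases sc \<kappa> xs ys" unfolding xs_def ys_def by (rule dg)
  have dd: "dual_bases scq \<kappa>q es es'" unfolding es_def es'_def by (rule dq)
  define R where "R a = (\<Sum>i<length es. scq (a (es!i)) (es'!i))" for a :: "'q \<Rightarrow> complex"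
  have Rr: "a z = \<kappa>q z (R a)" if "lin_functional scq a" for a z
    unfolding R_def by (rule Q.riesz[OF dd that])
  define c where "c = s (R \<alpha>)"
  define d' where "d' = s (R \<beta>)"
  have cC: "c \<in> C" "d' \<in> C" unfolding c_def d'_def by (rule s_C)+
  have pc: "R \<alpha> = \<pi> c" "R \<beta> = \<pi> d'" unfolding c_def d'_def by (simp_all add: s_pi)
  define e where "e = f x - x"
  have eC': "e \<in> C" unfolding e_def by (rule eC)
  have y: "\<phi> x = \<pi> e" unfolding \<phi>_def e_def ..
  have U: "(\<Sum>a<length xs. sc (\<alpha> (\<phi> (ys!a))) (xs!a)) = - f c"
    by (rule repr_g[OF d la cC(1)]) (simp add: Rr[OF la] pc)
  have W: "(\<Sum>a<length xs. sc (\<beta> (\<phi> (ys!a))) (xs!a)) = - f d'"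
    by (rule repr_g[OF d lb cC(2)]) (simp add: Rr[OF lb] pc)
  have LHS: "cop (cobracket_f sc br \<kappa>) x (\<lambda>v. \<alpha> (\<phi> v)) (\<lambda>v. \<beta> (\<phi> v)) = - \<kappa> x (br (f c) (f d'))"
    unfolding cop_def cobf_eq[OF d xs_def ys_def] U W by (simp add: br_neg1 br_neg2)
  have lad: "lin_functional scq (\<lambda>v. \<alpha> (brq (\<phi> x) v))"
    using Vector_Spaces.linear_compose[OF brq_lin2 la[unfolded lin_functional_def], of "\<phi> x"]
    unfolding lin_functional_def o_def .
  have lbd: "lin_functional scq (\<lambda>v. \<beta> (brq (\<phi> x) v))"
    using Vector_Spaces.linear_compose[OF brq_lin2 lb[unfolded lin_functional_def], of "\<phi> x"]
    unfolding lin_functional_def o_def .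
  have Rad: "R (\<lambda>v. \<alpha> (brq (\<phi> x) v)) = brq (R \<alpha>) (\<phi> x)"
  proof (rule Q.unique)
    fix z
    have "\<kappa>q z (R (\<lambda>v. \<alpha> (brq (\<phi> x) v))) = \<alpha> (brq (\<phi> x) z)" using Rr[OF lad, of z] by simp
    also have "\<dots> = \<kappa>q (brq (\<phi> x) z) (R \<alpha>)" by (rule Rr[OF la])
    also have "\<dots> = \<kappa>q z (brq (R \<alpha>) (\<phi> x))" by (metis kq_sym kq_inv)
    finally show "\<kappa>q z (R (\<lambda>v. \<alpha> (brq (\<phi> x) v))) = \<kappa>q z (brq (R \<alpha>) (\<phi> x))" .
  qed
  have "cobracket scq brq \<kappa>q fq (\<phi> x) \<alpha> \<beta> =
      \<beta> (fq (brq (R \<alpha>) (\<phi> x))) + \<beta> (brq (\<phi> x) (fq (R \<alpha>)))"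
    unfolding cobracket_def rq_eq[OF es_def es'_def lad lb] rq_eq[OF es_def es'_def la lbd]
    using Rad unfolding R_def by simp
  also have "\<dots> = \<kappa>q (fq (brq (\<pi> c) (\<pi> e))) (\<pi> d') + \<kappa>q (brq (\<pi> e) (fq (\<pi> c))) (\<pi> d')"
    using Rr[OF lb, of "fq (brq (\<pi> c) (\<pi> e))"] Rr[OF lb, of "brq (\<pi> e) (fq (\<pi> c))"]
    unfolding pc y by simp
  also have "\<dots> = \<kappa> (f (br c e)) d' + \<kappa> (br e (f c)) d'"
    using cC eC' by (simp add: brq_pi fq_pi kq_pi brC fC)
  also have "\<dots> = - \<kappa> x (br (f c) (f d'))"
    unfolding e_def by (rule final_id[symmetric])
  finally show ?thesis using LHS by simp
qed

end


context msetup begin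

lemma kernel: "{x. \<pi> (f x - x) = 0} = {a + b | a b. f a = 0 \<and> f b = b}"
proof (intro set_eqI iffI)
  fix x assume "x \<in> {x. \<pi> (f x - x) = 0}"
  then have "f (f x - x) = 0" using piK[OF eC] by simp
  then have ff: "f (f x) = f x" by (simp add: f_diff)
  have "x = (x - f x) + f x" by simp
  moreover have "f (x - f x) = 0" using ff by (simp add: f_diff)
  ultimately show "x \<in> {a + b | a b. f a = 0 \<and> f b = b}" using ff by blast
next
  fix x assume "x \<in> {a + b | a b. f a = 0 \<and> f b = b}"
  then obtain a b where x: "x = a + b" "f a = 0" "f b = b" by blast
  then have "f x - x = - a" by (simp add: f_add)
  moreover have "f (- a) = 0" using x by (simp add: f_neg)
  ultimately have "\<pi> (f x - x) = 0" using piK[OF eC, of x] by simp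
  then show "x \<in> {x. \<pi> (f x - x) = 0}" by simp
qed

lemma range_phi: "range (\<lambda>x. \<pi> (f x - x)) = UNIV"
  using quot_surj by (simp add: image_image)

lemma phi_eq: "(\<lambda>x. \<pi> (f x - x)) = \<phi>"
  by (rule ext) (simp add: \<phi>_def)

lemma hom: "lie_bialg_hom sc scq (bracket_f br f) (cop (cobracket_f sc br \<kappa>))
             brq (cobracket scq brq \<kappa>q fq) (\<lambda>x. \<pi> (f x - x))"
  unfolding lie_bialg_hom_def phi_eq
proof (intro conjI allI impI)
  show "Vector_Spaces.linear sc scq \<phi>" by (rule phi_lin)
  fix x y show "\<phi> (bracket_f br f x y) = brq (\<phi> x) (\<phi> y)" by (rule phi_br)
next
  fix x \<alpha> \<beta> assume "lin_functional scq \<alpha>" "lin_functional scq \<beta>"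
  then show "cop (cobracket_f sc br \<kappa>) x (\<lambda>v. \<alpha> (\<phi> v)) (\<lambda>v. \<beta> (\<phi> v)) = cobracket scq brq \<kappa>q fq (\<phi> x) \<alpha> \<beta>"
    by (rule cob)
qed

end

theorem mainTheorem16:
  fixes sc :: "complex \<Rightarrow> 'g::ab_group_add \<Rightarrow> 'g"
    and br :: "'g \<Rightarrow> 'g \<Rightarrow> 'g" and \<kappa> :: "'g \<Rightarrow> 'g \<Rightarrow> complex" and f :: "'g \<Rightarrow> 'g"
    and scq :: "complex \<Rightarrow> 'q::ab_group_add \<Rightarrow> 'q" and \<pi> :: "'g \<Rightarrow> 'q"
  defines "c1 \<equiv> range (\<lambda>x. f x - x)"
  assumes fact: "factorizable sc br \<kappa> f"
    and quot_vs: "vector_space scq"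
    and quot_lin: "Vector_Spaces.linear sc scq \<pi>"
    and quot_surj: "\<pi> ` c1 = UNIV"
    and quot_ker: "\<forall>x\<in>c1. \<pi> x = 0 \<longleftrightarrow> x \<in> perp \<kappa> c1"
  shows "perp \<kappa> c1 = {x. f x = 0}
    \<and> f ` c1 \<subseteq> c1
    \<and> (\<forall>x\<in>c1. \<forall>y\<in>c1. br x y \<in> c1)
    \<and> (\<exists>brq \<kappa>q fq.
          (\<forall>x\<in>c1. \<forall>y\<in>c1. brq (\<pi> x) (\<pi> y) = \<pi> (br x y))
        \<and> (\<forall>x\<in>c1. \<forall>y\<in>c1. \<kappa>q (\<pi> x) (\<pi> y) = \<kappa> x y)
        \<and> (\<forall>x\<in>c1. fq (\<pi> x) = \<pi> (f x))
        \<and> factorizable scq brq \<kappa>q fq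
        \<and> lie_bialg_hom sc scq (bracket_f br f) (cop (cobracket_f sc br \<kappa>))
             brq (cobracket scq brq \<kappa>q fq) (\<lambda>x. \<pi> (f x - x))
        \<and> range (\<lambda>x. \<pi> (f x - x)) = UNIV
        \<and> {x. \<pi> (f x - x) = 0} = {a + b | a b. f a = 0 \<and> f b = b})"
proof -
  interpret M: msetup sc br \<kappa> f scq \<pi>
    using fact quot_vs quot_lin quot_surj quot_ker unfolding c1_def by (rule msetup.intro)
  show ?thesis
    unfolding c1_def
  proof (intro conjI exI)
    show "perp \<kappa> (range (\<lambda>x. f x - x)) = {x. f x = 0}" by (rule M.perp_C)
    show "f ` range (\<lambda>x. f x - x) \<subseteq> range (\<lambda>x. f x - x)" using M.fC by blast
    show "\<forall>x\<in>range (\<lambda>x. f x - x). \<forall>y\<in>range (\<lambda>x. f x - x). br x y \<in> range (\<lambda>x. f x - x)"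
      using M.brC by blast
    show "\<forall>x\<in>range (\<lambda>x. f x - x). \<forall>y\<in>range (\<lambda>x. f x - x). M.brq (\<pi> x) (\<pi> y) = \<pi> (br x y)"
      using M.brq_pi by blast
    show "\<forall>x\<in>range (\<lambda>x. f x - x). \<forall>y\<in>range (\<lambda>x. f x - x). M.\<kappa>q (\<pi> x) (\<pi> y) = \<kappa> x y"
      using M.kq_pi by blast
    show "\<forall>x\<in>range (\<lambda>x. f x - x). M.fq (\<pi> x) = \<pi> (f x)" using M.fq_pi by blast
    show "factorizable scq M.brq M.\<kappa>q M.fq" by (rule M.Q_fact)
    show "lie_bialg_hom sc scq (bracket_f br f) (cop (cobracket_f sc br \<kappa>)) M.brq
        (cobracket scq M.brq M.\<kappa>q M.fq) (\<lambda>x. \<pi> (f x - x))" by (rule M.hom)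
    show "range (\<lambda>x. \<pi> (f x - x)) = UNIV" by (rule M.range_phi)
    show "{x. \<pi> (f x - x) = 0} = {a + b |a b. f a = 0 \<and> f b = b}" by (rule M.kernel)
  qed
qed

end
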